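(* Let $V$ be a finite vocabulary. Each word $x\in V$ has a synonym set $S_x\subseteq V$ with $x\in S_x$, and the synonym relation is symmetric ($x'\in S_x$ iff $x\in S_{x'}$). Each word $x\in V$ has a nonempty perturbation set $P_x\subseteq V$. Fix integers $L\ge 1$ and $0\le R\le L$, a finite label set $\mathcal{Y}$, and a classifier $f: V^L\to\mathcal{Y}$. For a sentence $X=x_1,\ldots,x_L\in V^L$ let $$S_X=\Big\{X'=x'_1,\ldots,x'_L\in V^L:\ \textstyle\sum_{i=1}^L \mathbb{I}\{x'_i\neq x_i\}\le R,\ x'_i\in S_{x_i}\ \forall i\Big\},$$ let $\Pi_X$ be the probability distribution on $V^L$ given by $\Pi_X(Z)=\prod_{i=1}^L \mathbb{I}\{z_i\in P_{x_i}\}/|P_{x_i}|$ for $Z=z_1,\ldots,z_L$, and let $g^{\mathrm{RS}}(X,c)=\mathbb{P}_{Z\sim\Pi_X}(f(Z)=c)$ for $c\in\mathcal{Y}$. Assume $|P_x|=|P_{x'}|$ for every word $x$ and every synonym $x'\in S_x$. Define, for each word $x$, $q_x=\min_{x'\in S_x}|P_x\cap P_{x'}|/|P_x|$. For a given sentence $X=x_1,\ldots,x_L$, order its positions as $i_1,\ldots,i_L$ so that $q_{x_{i_1}}\le q_{x_{i_2}}\le\cdots\le q_{x_{i_L}}$, and set $q_X:=1-\prod_{j=1}^R q_{x_{i_j}}$. Then for every label $c\in\mathcal{Y}$, $$\min_{X'\in S_X} g^{\mathrm{RS}}(X',c)\ge \max\big(g^{\mathrm{RS}}(X,c)-q_X,\,0\big),\qquad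 \max_{X'\in S_X} g^{\mathrm{RS}}(X',c)\le \min\big(g^{\mathrm{RS}}(X,c)+q_X,\,1\big).$$ Equivalently, $|g^{\mathrm{RS}}(X',c)-g^{\mathrm{RS}}(X,c)|\le q_X$ for all $X'\in S_X$ and all $c\in\mathcal{Y}$.
   Context: $g^{\mathrm{RS}}(X,c)$ is the "soft score" of label $c$ of the smoothed classifier $f^{\mathrm{RS}}(X)=\arg\max_{c\in\mathcal{Y}} g^{\mathrm{RS}}(X,c)$. $S_X$ is the set of adversarial sentences obtained by replacing at most $R$ words of $X$ by synonyms. *)

theory Defs
  imports Complex_Main
begin

definition sentences :: "'w set \<Rightarrow> nat \<Rightarrow> 'w list set" where
  "sentences V L = {Z. length Z = L \<and> set Z \<subseteq> V}"

definition adv_set :: "'w set \<Rightarrow> ('w \<Rightarrow> 'w set) \<Rightarrow> nat \<Rightarrow> 'w list \<Rightarrow> 'w list set" where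
  "adv_set V Syn R X = {X'. X' \<in> sentences V (length X)
      \<and> card {i. i < length X \<and> X' ! i \<noteq> X ! i} \<le> R
      \<and> (\<forall>i<length X. X' ! i \<in> Syn (X ! i))}"

definition Pi_dist :: "('w \<Rightarrow> 'w set) \<Rightarrow> 'w list \<Rightarrow> 'w list \<Rightarrow> real" where
  "Pi_dist P X Z = (\<Prod>i<length X. (if Z ! i \<in> P (X ! i) then 1 else 0) / real (card (P (X ! i))))"

definition gRS :: "'w set \<Rightarrow> ('w \<Rightarrow> 'w set) \<Rightarrow> ('w list \<Rightarrow> 'y) \<Rightarrow> 'w list \<Rightarrow> 'y \<Rightarrow> real" where
  "gRS V P f X c = (\<Sum>Z\<in>sentences V (length X). if f Z = c then Pi_dist P X Z else 0)"

definition q_word :: "('w \<Rightarrow> 'w set) \<Rightarrow> ('w \<Rightarrow> 'w set) \<Rightarrow> 'w \<Rightarrow> real" where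
  "q_word Syn P x = Min ((\<lambda>x'. real (card (P x \<inter> P x')) / real (card (P x))) ` Syn x)"

definition q_sent :: "('w \<Rightarrow> 'w set) \<Rightarrow> ('w \<Rightarrow> 'w set) \<Rightarrow> nat \<Rightarrow> 'w list \<Rightarrow> real" where
  "q_sent Syn P R X = 1 - prod_list (take R (sort (map (q_word Syn P) X)))"

end

theory Submission
  imports Defs "HOL-Library.Multiset"
begin


lemma sum_prod_sentences:
  fixes h :: "nat \<Rightarrow> 'w \<Rightarrow> real"
  assumes "finite V"
  shows "(\<Sum>Z\<in>sentences V n. \<Prod>i<n. h i (Z!i)) = (\<Prod>i<n. \<Sum>v\<in>V. h i v)"
proof (induction n arbitrary: h)
  case 0
  have "sentences V 0 = {[]}" by (auto simp: sentences_def)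
  then show ?case by simp
next
  case (Suc n)
  have eq: "sentences V (Suc n) = (\<lambda>(v,Z). v#Z) ` (V \<times> sentences V n)"
    by (fastforce simp: sentences_def length_Suc_conv image_def)
  have inj: "inj_on (\<lambda>(v,Z). v#Z) (V \<times> sentences V n)" by (auto simp: inj_on_def)
  have "(\<Sum>Z\<in>sentences V (Suc n). \<Prod>i<Suc n. h i (Z!i))
      = (\<Sum>(v,Z)\<in>V \<times> sentences V n. \<Prod>i<Suc n. h i ((v#Z)!i))"
    unfolding eq by (subst sum.reindex[OF inj]) (simp add: case_prod_unfold)
  also have "\<dots> = (\<Sum>v\<in>V. \<Sum>Z\<in>sentences V n. h 0 v * (\<Prod>i<n. h (Suc i) (Z!i)))"
    by (simp only: sum.cartesian_product) (rule sum.cong, auto simp del: prod.lessThan_Suc simp add: prod.lessThan_Suc_shift)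
  also have "\<dots> = (\<Sum>v\<in>V. h 0 v) * (\<Sum>Z\<in>sentences V n. \<Prod>i<n. h (Suc i) (Z!i))"
    by (rule sum_product[symmetric])
  also have "\<dots> = (\<Sum>v\<in>V. h 0 v) * (\<Prod>i<n. \<Sum>v\<in>V. h (Suc i) v)" using Suc.IH[of "\<lambda>i. h (Suc i)"] by simp
  also have "\<dots> = (\<Prod>i<Suc n. \<Sum>v\<in>V. h i v)" by (simp only: prod.lessThan_Suc_shift)
  finally show ?case .
qed

lemma prod_list_01:
  fixes ys :: "real list"
  assumes "\<forall>y\<in>set ys. 0 \<le> y \<and> y \<le> 1"
  shows "0 \<le> prod_list ys \<and> prod_list ys \<le> 1"
  using assms by (induction ys) (auto intro: mult_le_one)

lemma prod_take_sorted_le: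
  fixes ys :: "real list"
  assumes "sorted ys" "\<forall>y\<in>set ys. 0 \<le> y \<and> y \<le> 1" "M \<subseteq># mset ys" "size M \<le> R"
  shows "prod_list (take R ys) \<le> prod_mset M"
  using assms
proof (induction ys arbitrary: M R)
  case Nil
  then show ?case by simp
next
  case (Cons a ys)
  show ?case
  proof (cases R)
    case 0
    then show ?thesis using Cons.prems by simp
  next
    case (Suc R')
    have a: "0 \<le> a" "a \<le> 1" and s: "sorted ys" and ay: "\<forall>y\<in>set ys. a \<le> y"
      and ys01: "\<forall>y\<in>set ys. 0 \<le> y \<and> y \<le> 1" using Cons.prems by auto
    have ptk: "0 \<le> prod_list (take R' ys)" "prod_list (take R' ys) \<le> 1"
      using prod_list_01[of "take R' ys"] ys01 by (auto dest: in_set_takeD)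
    have tk: "prod_list (take R (a#ys)) = a * prod_list (take R' ys)" using Suc by simp
    show ?thesis
    proof (cases "a \<in># M")
      case True
      define M' where "M' = M - {#a#}"
      have M: "M = add_mset a M'" using True M'_def by simp
      have "M' \<subseteq># mset ys" using Cons.prems(3) M by simp
      moreover have "size M' \<le> R'" using Cons.prems(4) M Suc by simp
      ultimately have "prod_list (take R' ys) \<le> prod_mset M'" using Cons.IH s ys01 by blast
      then show ?thesis using tk M a by (simp add: mult_left_mono)
    next
      case False
      have Msub: "M \<subseteq># mset ys" using Cons.prems(3) False
        unfolding subseteq_mset_def
      proof (intro allI)
        fix x
        have "count M x \<le> count (add_mset a (mset ys)) x"
          using Cons.prems(3) by (simp add: subseteq_mset_def del: count_add_mset)
        then show "count M x \<le> count (mset ys) x" using False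
          by (cases "x = a") (auto simp: not_in_iff)
      qed
      show ?thesis
      proof (cases "M = {#}")
        case True
        then show ?thesis using tk a ptk by (simp add: mult_le_one)
      next
        case False
        then obtain m where mM: "m \<in># M" by blast
        define M' where "M' = M - {#m#}"
        have M: "M = add_mset m M'" using mM M'_def by simp
        have mys: "m \<in> set ys" using mset_subset_eqD[OF Msub mM] by simp
        have "M' \<subseteq># mset ys" using Msub M'_def by (meson diff_subset_eq_self subset_mset.order_trans)
        moreover have "size M' \<le> R'" using Cons.prems(4) M Suc by simp
        ultimately have "prod_list (take R' ys) \<le> prod_mset M'" using Cons.IH s ys01 by blast
        moreover have "a \<le> m" "0 \<le> m" using ay mys ys01 by auto
        ultimately show ?thesis using tk M ptk by (simp add: mult_mono)
      qed
    qed
  qed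
qed

lemma prod_subset_ge_take_sort:
  fixes xs :: "real list"
  assumes "\<forall>y\<in>set xs. 0 \<le> y \<and> y \<le> 1" "D \<subseteq> {..<length xs}" "card D \<le> R"
  shows "prod_list (take R (sort xs)) \<le> (\<Prod>i\<in>D. xs!i)"
proof -
  have fD: "finite D" using assms(2) finite_subset by blast
  have "image_mset (nth xs) (mset_set D) \<subseteq># image_mset (nth xs) (mset_set {..<length xs})"
    using assms(2) by (intro image_mset_subseteq_mono subset_imp_msubset_mset_set) auto
  also have "image_mset (nth xs) (mset_set {..<length xs}) = mset xs"
  proof -
    have "mset xs = mset (map (nth xs) [0..<length xs])" by (simp add: map_nth)
    also have "\<dots> = image_mset (nth xs) (mset_set {..<length xs})" by (simp add: atLeast0LessThan)
    finally show ?thesis by simp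
  qed
  also have "\<dots> = mset (sort xs)" by simp
  finally have sub: "image_mset (nth xs) (mset_set D) \<subseteq># mset (sort xs)" .
  have "prod_list (take R (sort xs)) \<le> prod_mset (image_mset (nth xs) (mset_set D))"
    by (rule prod_take_sorted_le) (use sub assms fD in auto)
  then show ?thesis by (simp add: prod_unfold_prod_mset)
qed



theorem theorem1:
  fixes V :: "'w set" and Syn P :: "'w \<Rightarrow> 'w set"
    and L R :: nat and Y :: "'y set" and f :: "'w list \<Rightarrow> 'y"
    and X :: "'w list" and c :: 'y
  assumes finV: "finite V"
    and Syn_sub: "\<forall>x\<in>V. Syn x \<subseteq> V"
    and Syn_refl: "\<forall>x\<in>V. x \<in> Syn x"
    and Syn_sym: "\<forall>x\<in>V. \<forall>x'\<in>V. x' \<in> Syn x \<longleftrightarrow> x \<in> Syn x'"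
    and P_sub: "\<forall>x\<in>V. P x \<subseteq> V"
    and P_ne: "\<forall>x\<in>V. P x \<noteq> {}"
    and L: "L \<ge> 1" and RL: "R \<le> L"
    and finY: "finite Y"
    and f_range: "\<forall>Z\<in>sentences V L. f Z \<in> Y"
    and P_card: "\<forall>x\<in>V. \<forall>x'\<in>Syn x. card (P x) = card (P x')"
    and X: "X \<in> sentences V L"
    and c: "c \<in> Y"
  shows "Min ((\<lambda>X'. gRS V P f X' c) ` adv_set V Syn R X)
           \<ge> max (gRS V P f X c - q_sent Syn P R X) 0
       \<and> Max ((\<lambda>X'. gRS V P f X' c) ` adv_set V Syn R X)
           \<le> min (gRS V P f X c + q_sent Syn P R X) 1"
proof -
  define n where "n = length X"
  define S where "S = sentences V n"
  have setX: "set X \<subseteq> V" using X by (auto simp: sentences_def)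
  have finS: "finite S"
    using finite_lists_length_eq[OF finV, of n] unfolding S_def sentences_def
    by (simp add: conj_commute)
  have Pfin: "finite (P x)" and Ppos: "card (P x) > 0" if "x \<in> V" for x
    using P_sub P_ne finV that finite_subset by (auto simp: card_gt_0_iff intro: finite_subset)
  define h where "h Y i v = (if v \<in> P (Y!i) then 1 else 0) / real (card (P (Y!i)))" for Y :: "'w list" and i v
  have h_nn: "0 \<le> h Y i v" for Y i v by (simp add: h_def)
  have PiY: "Pi_dist P Y Z = (\<Prod>i<n. h Y i (Z!i))" if "length Y = n" for Y Z
    using that by (simp add: Pi_dist_def h_def)
  have cnt: "(\<Sum>v\<in>V. (if v \<in> A then 1 else 0) / real k) = real (card A) / real k"
    if "A \<subseteq> V" for A k
  proof -
    have "(\<Sum>v\<in>V. (if v \<in> A then 1 else 0) / real k) = (\<Sum>v\<in>V \<inter> A. 1 / real k)"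
    proof -
      have "(\<Sum>v\<in>V. (if v \<in> A then 1 else 0) / real k) = (\<Sum>v\<in>V. if v \<in> A then 1 / real k else 0)"
        by (rule sum.cong) auto
      also have "\<dots> = (\<Sum>v\<in>V \<inter> A. 1 / real k)"
        using finV by (simp only: sum.inter_restrict)
      finally show ?thesis .
    qed
    also have "V \<inter> A = A" using that by blast
    finally show ?thesis by simp
  qed
  have sum1: "(\<Sum>Z\<in>S. Pi_dist P Y Z) = 1" if "Y \<in> S" for Y
  proof -
    have lY: "length Y = n" and sY: "set Y \<subseteq> V" using that by (auto simp: S_def sentences_def)
    have "(\<Sum>Z\<in>S. Pi_dist P Y Z) = (\<Sum>Z\<in>S. \<Prod>i<n. h Y i (Z!i))" using PiY lY by simp
    also have "\<dots> = (\<Prod>i<n. \<Sum>v\<in>V. h Y i v)" unfolding S_def by (rule sum_prod_sentences[OF finV])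
    also have "\<dots> = (\<Prod>i<n. 1)"
    proof (rule prod.cong[OF refl])
      fix i assume "i \<in> {..<n}"
      then have yV: "Y!i \<in> V" using lY sY by auto
      show "(\<Sum>v\<in>V. h Y i v) = 1"
        unfolding h_def using cnt[of "P (Y!i)"] P_sub yV Ppos[OF yV] by auto
    qed
    finally show ?thesis by simp
  qed
  have Pi_nn: "0 \<le> Pi_dist P Y Z" for Y Z
    by (simp add: Pi_dist_def prod_nonneg)
  have g01: "0 \<le> gRS V P f Y c \<and> gRS V P f Y c \<le> 1" if "Y \<in> S" for Y
  proof -
    have lY: "length Y = n" using that by (simp add: S_def sentences_def)
    have "gRS V P f Y c = (\<Sum>Z\<in>S. if f Z = c then Pi_dist P Y Z else 0)"
      by (simp add: gRS_def lY S_def)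
    moreover have "(\<Sum>Z\<in>S. if f Z = c then Pi_dist P Y Z else 0) \<le> (\<Sum>Z\<in>S. Pi_dist P Y Z)"
      by (rule sum_mono) (simp add: Pi_nn)
    moreover have "0 \<le> (\<Sum>Z\<in>S. if f Z = c then Pi_dist P Y Z else 0)"
      by (rule sum_nonneg) (simp add: Pi_nn)
    ultimately show ?thesis using sum1[OF that] by simp
  qed
  have q01: "0 \<le> q_word Syn P x \<and> q_word Syn P x \<le> 1" if "x \<in> V" for x
  proof -
    have fin: "finite (Syn x)" using Syn_sub that finV finite_subset by blast
    have xS: "x \<in> Syn x" using Syn_refl that by blast
    let ?A = "(\<lambda>x'. real (card (P x \<inter> P x')) / real (card (P x))) ` Syn x"
    have "0 \<le> Min ?A" using fin xS by (subst Min_ge_iff) auto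
    moreover have "Min ?A \<le> real (card (P x \<inter> P x)) / real (card (P x))"
      by (rule Min_le[OF _ imageI]) (use fin xS in auto)
    ultimately show ?thesis using Ppos[OF that] by (simp add: q_word_def)
  qed
  have key: "\<bar>gRS V P f X' c - gRS V P f X c\<bar> \<le> q_sent Syn P R X" if X'A: "X' \<in> adv_set V Syn R X" for X'
  proof -
    define D where "D = {i. i < n \<and> X'!i \<noteq> X!i}"
    have lX': "length X' = n" and sX': "set X' \<subseteq> V" and cD: "card D \<le> R"
      and syn: "\<forall>i<n. X'!i \<in> Syn (X!i)"
      using X'A by (auto simp: adv_set_def sentences_def D_def n_def)
    have X'S: "X' \<in> S" and XS: "X \<in> S" using lX' sX' setX by (auto simp: S_def sentences_def n_def)
    define m where "m i v = min (h X i v) (h X' i v)" for i v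
    define Ov where "Ov = (\<Prod>i<n. \<Sum>v\<in>V. m i v)"
    have sumO: "(\<Sum>Z\<in>S. \<Prod>i<n. m i (Z!i)) = Ov"
      unfolding S_def Ov_def by (rule sum_prod_sentences[OF finV])
    have m1: "(\<Prod>i<n. m i (Z!i)) \<le> Pi_dist P X Z" for Z
      unfolding PiY[OF n_def[symmetric]]
      by (rule prod_mono) (auto simp: m_def h_nn)
    have m2: "(\<Prod>i<n. m i (Z!i)) \<le> Pi_dist P X' Z" for Z
      unfolding PiY[OF lX']
      by (rule prod_mono) (auto simp: m_def h_nn)
    have gX: "gRS V P f X c = (\<Sum>Z\<in>S. if f Z = c then Pi_dist P X Z else 0)"
      by (simp add: gRS_def S_def n_def)
    have gX': "gRS V P f X' c = (\<Sum>Z\<in>S. if f Z = c then Pi_dist P X' Z else 0)"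
      by (simp add: gRS_def S_def lX')
    have d1: "gRS V P f X c - gRS V P f X' c \<le> 1 - Ov"
    proof -
      have "gRS V P f X c - gRS V P f X' c
          = (\<Sum>Z\<in>S. (if f Z = c then Pi_dist P X Z else 0) - (if f Z = c then Pi_dist P X' Z else 0))"
        unfolding gX gX' by (simp add: sum_subtractf)
      also have "\<dots> \<le> (\<Sum>Z\<in>S. Pi_dist P X Z - (\<Prod>i<n. m i (Z!i)))"
        by (rule sum_mono) (use m1 m2 in auto)
      also have "\<dots> = 1 - Ov" by (simp add: sum_subtractf sum1[OF XS] sumO)
      finally show ?thesis .
    qed
    have d2: "gRS V P f X' c - gRS V P f X c \<le> 1 - Ov"
    proof -
      have "gRS V P f X' c - gRS V P f X c
          = (\<Sum>Z\<in>S. (if f Z = c then Pi_dist P X' Z else 0) - (if f Z = c then Pi_dist P X Z else 0))"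
        unfolding gX gX' by (simp add: sum_subtractf)
      also have "\<dots> \<le> (\<Sum>Z\<in>S. Pi_dist P X' Z - (\<Prod>i<n. m i (Z!i)))"
        by (rule sum_mono) (use m1 m2 in auto)
      also have "\<dots> = 1 - Ov" by (simp add: sum_subtractf sum1[OF X'S] sumO)
      finally show ?thesis .
    qed
    define s where "s i = (\<Sum>v\<in>V. m i v)" for i
    have s_eq: "s i = real (card (P (X!i) \<inter> P (X'!i))) / real (card (P (X!i)))" if "i < n" for i
    proof -
      have xV: "X!i \<in> V" and x'V: "X'!i \<in> V" using that setX sX' lX' n_def by auto
      have ceq: "card (P (X'!i)) = card (P (X!i))" using P_card xV syn that by metis
      have "m i v = (if v \<in> P (X!i) \<inter> P (X'!i) then 1 else 0) / real (card (P (X!i)))" for v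
        unfolding m_def h_def ceq using Ppos[OF xV] by auto
      then have "s i = (\<Sum>v\<in>V. (if v \<in> P (X!i) \<inter> P (X'!i) then 1 else 0) / real (card (P (X!i))))"
        unfolding s_def by simp
      also have "\<dots> = real (card (P (X!i) \<inter> P (X'!i))) / real (card (P (X!i)))"
        by (rule cnt) (use P_sub xV in blast)
      finally show ?thesis .
    qed
    have s1: "s i = 1" if "i < n" "i \<notin> D" for i
    proof -
      have "X'!i = X!i" using that D_def by auto
      moreover have "X!i \<in> V" using that setX n_def by auto
      ultimately show ?thesis using s_eq[OF that(1)] Ppos by simp
    qed
    have sq: "q_word Syn P (X!i) \<le> s i" if "i < n" for i
    proof -
      have xV: "X!i \<in> V" using that setX n_def by auto
      have fin: "finite (Syn (X!i))" using Syn_sub xV finV finite_subset by blast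
      show ?thesis unfolding s_eq[OF that] q_word_def
        by (rule Min_le[OF _ imageI]) (use fin syn that in auto)
    qed
    have Dsub: "D \<subseteq> {..<n}" by (auto simp: D_def)
    have Oeq: "Ov = (\<Prod>i\<in>D. s i)"
      unfolding Ov_def s_def[symmetric]
      by (rule prod.mono_neutral_right) (use Dsub s1 in auto)
    have "(\<Prod>i\<in>D. q_word Syn P (X!i)) \<le> (\<Prod>i\<in>D. s i)"
    proof (rule prod_mono)
      fix i assume "i \<in> D"
      then have "i < n" using Dsub by auto
      then have "X!i \<in> V" using setX n_def by auto
      then show "0 \<le> q_word Syn P (X!i) \<and> q_word Syn P (X!i) \<le> s i"
        using q01 sq \<open>i < n\<close> by blast
    qed
    then have O1: "(\<Prod>i\<in>D. q_word Syn P (X!i)) \<le> Ov" using Oeq by simp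
    have "prod_list (take R (sort (map (q_word Syn P) X))) \<le> (\<Prod>i\<in>D. (map (q_word Syn P) X)!i)"
      by (rule prod_subset_ge_take_sort) (use q01 setX Dsub cD n_def in auto)
    also have "\<dots> = (\<Prod>i\<in>D. q_word Syn P (X!i))"
      by (rule prod.cong) (use Dsub n_def in auto)
    finally have "1 - Ov \<le> q_sent Syn P R X" using O1 by (simp add: q_sent_def)
    then show ?thesis using d1 d2 by linarith
  qed
  have finA: "finite (adv_set V Syn R X)"
    by (rule finite_subset[OF _ finS]) (auto simp: adv_set_def S_def n_def)
  have XA: "X \<in> adv_set V Syn R X"
    using X Syn_refl setX by (auto simp: adv_set_def sentences_def dest!: nth_mem)
  have AS: "X' \<in> S" if "X' \<in> adv_set V Syn R X" for X'
    using that by (auto simp: adv_set_def S_def n_def)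
  have fI: "finite ((\<lambda>X'. gRS V P f X' c) ` adv_set V Syn R X)" using finA by simp
  have nI: "(\<lambda>X'. gRS V P f X' c) ` adv_set V Syn R X \<noteq> {}" using XA by blast
  show ?thesis
  proof
    show "max (gRS V P f X c - q_sent Syn P R X) 0 \<le> Min ((\<lambda>X'. gRS V P f X' c) ` adv_set V Syn R X)"
      unfolding Min_ge_iff[OF fI nI]
    proof
      fix y assume "y \<in> (\<lambda>X'. gRS V P f X' c) ` adv_set V Syn R X"
      then obtain X' where X': "X' \<in> adv_set V Syn R X" and y: "y = gRS V P f X' c" by blast
      show "max (gRS V P f X c - q_sent Syn P R X) 0 \<le> y"
        using key[OF X'] g01[OF AS[OF X']] y by (simp add: abs_le_iff)
    qed
    show "Max ((\<lambda>X'. gRS V P f X' c) ` adv_set V Syn R X) \<le> min (gRS V P f X c + q_sent Syn P R X) 1"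
      unfolding Max_le_iff[OF fI nI]
    proof
      fix y assume "y \<in> (\<lambda>X'. gRS V P f X' c) ` adv_set V Syn R X"
      then obtain X' where X': "X' \<in> adv_set V Syn R X" and y: "y = gRS V P f X' c" by blast
      show "y \<le> min (gRS V P f X c + q_sent Syn P R X) 1"
        using key[OF X'] g01[OF AS[OF X']] y by (simp add: abs_le_iff)
    qed
  qed
qed

end
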